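(* The polycyclic monoid on two generators, $P_2=\mathrm{Mon}^0\langle p,q,p^{-1},q^{-1}\mid pp^{-1}=1=qq^{-1},\ pq^{-1}=0=qp^{-1}\rangle$ (monoid with zero), is neither left fairly amenable nor right fairly amenable.
   Context: $\mathrm{Mon}^0\langle\cdot\mid\cdot\rangle$ denotes the monoid with zero $0$ given by the presentation. For a semigroup $U$, $s\in U$, $A\subseteq U$: $s$ acts injectively on the left (right) of $A$ if $x\mapsto sx$ ($x\mapsto xs$) is injective on $A$. A finitely-additive probability measure on $U$ is $\mu:\mathcal P(U)\to[0,1]$ with $\mu(U)=1$, additive on disjoint sets; it is left fairly invariant if $\mu(sA)=\mu(A)$ whenever $s$ acts injectively on the left of $A$ (right fairly invariant analogously with $As$). $U$ is left (right) fairly amenable if such a measure exists. *)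

theory Defs
  imports Complex_Main "HOL-Library.Sublist"
begin

definition fa_prob_measure :: "('a set \<Rightarrow> real) \<Rightarrow> bool" where
  "fa_prob_measure \<mu> \<longleftrightarrow>
     (\<forall>A. 0 \<le> \<mu> A \<and> \<mu> A \<le> 1) \<and> \<mu> UNIV = 1 \<and>
     (\<forall>A B. A \<inter> B = {} \<longrightarrow> \<mu> (A \<union> B) = \<mu> A + \<mu> B)"

definition left_fairly_amenable :: "('a \<Rightarrow> 'a \<Rightarrow> 'a) \<Rightarrow> bool" where
  "left_fairly_amenable f \<longleftrightarrow>
     (\<exists>\<mu>. fa_prob_measure \<mu> \<and>
        (\<forall>s A. inj_on (\<lambda>x. f s x) A \<longrightarrow> \<mu> ((\<lambda>x. f s x) ` A) = \<mu> A))"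

definition right_fairly_amenable :: "('a \<Rightarrow> 'a \<Rightarrow> 'a) \<Rightarrow> bool" where
  "right_fairly_amenable f \<longleftrightarrow>
     (\<exists>\<mu>. fa_prob_measure \<mu> \<and>
        (\<forall>s A. inj_on (\<lambda>x. f x s) A \<longrightarrow> \<mu> ((\<lambda>x. f x s) ` A) = \<mu> A))"

text \<open>Generators p, q are encoded
  as True, False.  For words x = x1...xn, y over {p,q}, the element
  Some (x, y) represents x^{-1} y  (where x^{-1} = xn^{-1} ... x1^{-1}),
  and None is the zero.  This is the standard normal form: in P_2 every nonzero
  element is uniquely of the form x^{-1} y.  Multiplication:
  x^{-1} y * u^{-1} v = x^{-1} z v if y = z u;  (z x)^{-1} v if u = z y;  0 otherwise.\<close>

type_synonym P2 = "(bool list \<times> bool list) option"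

fun P2_mult :: "P2 \<Rightarrow> P2 \<Rightarrow> P2" where
  "P2_mult None _ = None"
| "P2_mult _ None = None"
| "P2_mult (Some (x, y)) (Some (u, v)) =
     (if suffix u y then Some (x, take (length y - length u) y @ v)
      else if suffix y u then Some (take (length u - length y) u @ x, v)
      else None)"

definition P2_one :: P2 where "P2_one = Some ([], [])"
definition P2_zero :: P2 where "P2_zero = None"
definition P2_p :: P2 where "P2_p = Some ([], [True])"
definition P2_q :: P2 where "P2_q = Some ([], [False])"
definition P2_pinv :: P2 where "P2_pinv = Some ([True], [])"
definition P2_qinv :: P2 where "P2_qinv = Some ([False], [])"

end

theory Submission
  imports Defs
begin

lemma fa_mono:
  assumes "fa_prob_measure \<mu>" "B \<subseteq> A"
  shows "\<mu> B \<le> \<mu> A"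
proof -
  have "A = B \<union> (A - B)" "B \<inter> (A - B) = {}" using assms(2) by auto
  then have "\<mu> A = \<mu> B + \<mu> (A - B)" using assms(1) unfolding fa_prob_measure_def by metis
  moreover have "\<mu> (A - B) \<ge> 0" using assms(1) unfolding fa_prob_measure_def by blast
  ultimately show ?thesis by linarith
qed

lemma fa_add:
  assumes "fa_prob_measure \<mu>" "A \<inter> B = {}"
  shows "\<mu> (A \<union> B) = \<mu> A + \<mu> B"
  using assms unfolding fa_prob_measure_def by blast

lemma fa_nonneg:
  assumes "fa_prob_measure \<mu>"
  shows "0 \<le> \<mu> A"
  using assms unfolding fa_prob_measure_def by blast

lemma fa_univ:
  assumes "fa_prob_measure \<mu>"
  shows "\<mu> UNIV = 1"
  using assms unfolding fa_prob_measure_def by blast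

lemma abstract_contra:
  assumes m: "fa_prob_measure \<mu>"
    and d: "G1 \<inter> G2 = {}"
    and s1: "G1 \<subseteq> X"
    and s2: "G2 \<subseteq> X"
    and e1: "\<mu> G1 = \<mu> X"
    and e2: "\<mu> G2 = \<mu> X"
    and X: "X = UNIV - {z}"
    and az: "a \<noteq> z"
    and sing: "\<mu> {z} = \<mu> {a}"
  shows False
proof -
  have "\<mu> (G1 \<union> G2) = \<mu> G1 + \<mu> G2" using fa_add[OF m d] .
  moreover have "\<mu> (G1 \<union> G2) \<le> \<mu> X" using fa_mono[OF m] s1 s2 by (meson Un_least)
  moreover have "\<mu> X \<ge> 0" using fa_nonneg[OF m] .
  ultimately have X0: "\<mu> X = 0" using e1 e2 by linarith
  have "{a} \<subseteq> X" using X az by blast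
  then have "\<mu> {a} \<le> \<mu> X" using fa_mono[OF m] by blast
  moreover have "\<mu> {a} \<ge> 0" using fa_nonneg[OF m] .
  ultimately have z0: "\<mu> {z} = 0" using X0 sing by linarith
  have "X \<inter> {z} = {}" using X by blast
  then have "\<mu> (X \<union> {z}) = \<mu> X + \<mu> {z}" using fa_add[OF m] by blast
  moreover have "X \<union> {z} = UNIV" using X by blast
  ultimately show False using X0 z0 fa_univ[OF m] by simp
qed

lemma left_pinv: "P2_mult (Some ([b], [])) (Some (u, v)) = Some (u @ [b], v)"
  by (cases u) auto

lemma right_p: "P2_mult (Some (x, y)) (Some ([], [b])) = Some (x, y @ [b])"
  by auto

lemma snoc_ne: "Some (u @ [True], v::bool list) \<noteq> Some (u' @ [False], v')"
  "Some (u::bool list, v @ [True]) \<noteq> Some (u', v' @ [False])"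
  by (metis last_snoc option.inject prod.inject)+

lemma disj_sub: "A \<subseteq> C \<Longrightarrow> B \<subseteq> D \<Longrightarrow> C \<inter> D = {} \<Longrightarrow> A \<inter> B = {}"
  by blast

lemma nonzero_cases: "x \<in> UNIV - {None} \<Longrightarrow> \<exists>u v. x = Some (u, v)"
  by (cases x) auto

lemma not_left: "\<not> left_fairly_amenable P2_mult"
proof
  assume "left_fairly_amenable P2_mult"
  then obtain \<mu> where m: "fa_prob_measure \<mu>" and
    inv: "\<And>s A. inj_on (\<lambda>x. P2_mult s x) A \<Longrightarrow> \<mu> ((\<lambda>x. P2_mult s x) ` A) = \<mu> A"
    unfolding left_fairly_amenable_def by blast
  define X where "X = (UNIV - {None} :: P2 set)"
  have inj: "inj_on (\<lambda>x. P2_mult (Some ([b], [])) x) X" for b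
  proof (rule inj_onI)
    fix x y assume "x \<in> X" "y \<in> X" and e: "P2_mult (Some ([b], [])) x = P2_mult (Some ([b], [])) y"
    then obtain u v u' v' where "x = Some (u, v)" "y = Some (u', v')"
      using nonzero_cases unfolding X_def by metis
    then show "x = y" using e by (simp only: left_pinv) simp
  qed
  have sub: "(\<lambda>x. P2_mult (Some ([b], [])) x) ` X \<subseteq> {Some (u @ [b], v) | u v. True}" for b
  proof
    fix y assume "y \<in> (\<lambda>x. P2_mult (Some ([b], [])) x) ` X"
    then obtain x where "x \<in> X" "y = P2_mult (Some ([b], [])) x" by blast
    moreover obtain u v where "x = Some (u, v)" using nonzero_cases \<open>x \<in> X\<close> unfolding X_def by metis
    ultimately show "y \<in> {Some (u @ [b], v) | u v. True}" by (simp only: left_pinv) blast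
  qed
  have sX: "(\<lambda>x. P2_mult (Some ([b], [])) x) ` X \<subseteq> X" for b
    using sub[of b] unfolding X_def by blast
  have d: "(\<lambda>x. P2_mult (Some ([True], [])) x) ` X \<inter> (\<lambda>x. P2_mult (Some ([False], [])) x) ` X = {}"
  proof -
    have "{Some (u @ [True], v) | u (v::bool list). True} \<inter> {Some (u @ [False], v) | u v. True} = {}"
    proof (rule equals0I)
      fix y assume "y \<in> {Some (u @ [True], v) | u (v::bool list). True} \<inter> {Some (u @ [False], v) | u v. True}"
      then obtain u v u' v' where "y = Some (u @ [True], v)" "y = Some (u' @ [False], v')" by blast
      then show False using snoc_ne(1) by simp
    qed
    then show ?thesis using disj_sub[OF sub[of True] sub[of False]] by simp
  qed
  have s: "(\<lambda>x. P2_mult None x) ` {Some ([], [])} = {None}" by simp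
  have sing: "\<mu> {None} = \<mu> {Some ([], [])}"
    using inv[of None "{Some ([], [])}"] s by simp
  show False
    by (rule abstract_contra[OF m d sX sX inv[OF inj] inv[OF inj] X_def _ sing]) simp
qed

lemma not_right: "\<not> right_fairly_amenable P2_mult"
proof
  assume "right_fairly_amenable P2_mult"
  then obtain \<mu> where m: "fa_prob_measure \<mu>" and
    inv: "\<And>s A. inj_on (\<lambda>x. P2_mult x s) A \<Longrightarrow> \<mu> ((\<lambda>x. P2_mult x s) ` A) = \<mu> A"
    unfolding right_fairly_amenable_def by blast
  define X where "X = (UNIV - {None} :: P2 set)"
  have inj: "inj_on (\<lambda>x. P2_mult x (Some ([], [b]))) X" for b
  proof (rule inj_onI)
    fix x y assume "x \<in> X" "y \<in> X" and e: "P2_mult x (Some ([], [b])) = P2_mult y (Some ([], [b]))"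
    then obtain u v u' v' where "x = Some (u, v)" "y = Some (u', v')"
      using nonzero_cases unfolding X_def by metis
    then show "x = y" using e by (simp only: right_p) simp
  qed
  have sub: "(\<lambda>x. P2_mult x (Some ([], [b]))) ` X \<subseteq> {Some (u, v @ [b]) | u v. True}" for b
  proof
    fix y assume "y \<in> (\<lambda>x. P2_mult x (Some ([], [b]))) ` X"
    then obtain x where "x \<in> X" "y = P2_mult x (Some ([], [b]))" by blast
    moreover obtain u v where "x = Some (u, v)" using nonzero_cases \<open>x \<in> X\<close> unfolding X_def by metis
    ultimately show "y \<in> {Some (u, v @ [b]) | u v. True}" by (simp only: right_p) blast
  qed
  have sX: "(\<lambda>x. P2_mult x (Some ([], [b]))) ` X \<subseteq> X" for b
    using sub[of b] unfolding X_def by blast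
  have d: "(\<lambda>x. P2_mult x (Some ([], [True]))) ` X \<inter> (\<lambda>x. P2_mult x (Some ([], [False]))) ` X = {}"
  proof -
    have "{Some (u, v @ [True]) | (u::bool list) v. True} \<inter> {Some (u, v @ [False]) | u v. True} = {}"
    proof (rule equals0I)
      fix y assume "y \<in> {Some (u, v @ [True]) | (u::bool list) v. True} \<inter> {Some (u, v @ [False]) | u v. True}"
      then obtain u v u' v' where "y = Some (u, v @ [True])" "y = Some (u', v' @ [False])" by blast
      then show False using snoc_ne(2) by simp
    qed
    then show ?thesis using disj_sub[OF sub[of True] sub[of False]] by simp
  qed
  have s: "(\<lambda>x. P2_mult x None) ` {Some ([], [])} = {None}" by simp
  have sing: "\<mu> {None} = \<mu> {Some ([], [])}"
    using inv[of None "{Some ([], [])}"] s by simp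
  show False
    by (rule abstract_contra[OF m d sX sX inv[OF inj] inv[OF inj] X_def _ sing]) simp
qed

theorem mainTheorem20:
  shows "\<not> left_fairly_amenable P2_mult \<and> \<not> right_fairly_amenable P2_mult"
  using not_left not_right by blast

end
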